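(* For each integer $0\le k\le4$ and every $x\in\mathbb{R}$, \[ \big|H^{(k)}(x)-\big(i^ke^{ix}\alpha(x)+(2i)^ke^{2ix}\beta(x)\big)\big|\le\frac18 \qquad\text{and}\qquad |H^{(k)}(x)|\le 2^k+2. \]
   Context: Rudin–Shapiro polynomials: $P_0(z)=Q_0(z)=1$ and for $s\ge0$, $P_{s+1}(z)=P_s(z)+z^{2^s}Q_s(z)$, $Q_{s+1}(z)=P_s(z)-z^{2^s}Q_s(z)$. Let $t$ be an odd positive integer and $T:=2^{t+10}$. For $x\in\mathbb{R}$ define $\alpha(x):=2^{-(t+1)/2}P_t(e^{ix/T})$, $\beta(x):=2^{-(t+1)/2}Q_t(e^{ix/T})$, and $H(x):=e^{ix}\alpha(x)+e^{2ix}\beta(x)$. $H^{(k)}$ denotes the $k$-th derivative. *)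

theory Defs
  imports "HOL-Analysis.Analysis"
begin

text \<open>Rudin--Shapiro polynomials, as a pair (P_s, Q_s) of functions on the complex plane.\<close>
fun RS_pair :: "nat \<Rightarrow> (complex \<Rightarrow> complex) \<times> (complex \<Rightarrow> complex)" where
  "RS_pair 0 = ((\<lambda>z. 1), (\<lambda>z. 1))"
| "RS_pair (Suc s) =
     ((\<lambda>z. fst (RS_pair s) z + z ^ (2 ^ s) * snd (RS_pair s) z),
      (\<lambda>z. fst (RS_pair s) z - z ^ (2 ^ s) * snd (RS_pair s) z))"

definition RS_P :: "nat \<Rightarrow> complex \<Rightarrow> complex" where
  "RS_P s = fst (RS_pair s)"

definition RS_Q :: "nat \<Rightarrow> complex \<Rightarrow> complex" where
  "RS_Q s = snd (RS_pair s)"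

definition RS_T :: "nat \<Rightarrow> real" where
  "RS_T t = 2 ^ (t + 10)"

definition RS_alpha :: "nat \<Rightarrow> real \<Rightarrow> complex" where
  "RS_alpha t x = complex_of_real (2 powr (- (real t + 1) / 2))
      * RS_P t (exp (\<i> * complex_of_real (x / RS_T t)))"

definition RS_beta :: "nat \<Rightarrow> real \<Rightarrow> complex" where
  "RS_beta t x = complex_of_real (2 powr (- (real t + 1) / 2))
      * RS_Q t (exp (\<i> * complex_of_real (x / RS_T t)))"

definition RS_H :: "nat \<Rightarrow> real \<Rightarrow> complex" where
  "RS_H t x = exp (\<i> * complex_of_real x) * RS_alpha t x
      + exp (2 * \<i> * complex_of_real x) * RS_beta t x"

definition higher_vderiv :: "nat \<Rightarrow> (real \<Rightarrow> 'a::real_normed_vector) \<Rightarrow> real \<Rightarrow> 'a" where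
  "higher_vderiv k f = ((\<lambda>g x. vector_derivative g (at x)) ^^ k) f"

end

theory Submission
  imports Defs
begin


lemma hv_eq:
  assumes "f = g 0" and "\<And>k x. (g k has_vector_derivative g (Suc k) x) (at x)"
  shows "higher_vderiv k f = g k"
proof (induction k)
  case 0 then show ?case using assms(1) by (simp add: higher_vderiv_def)
next
  case (Suc k)
  have "higher_vderiv (Suc k) f = (\<lambda>x. vector_derivative (higher_vderiv k f) (at x))"
    by (simp add: higher_vderiv_def)
  also have "\<dots> = g (Suc k)" using Suc by (auto intro!: vector_derivative_at assms(2))
  finally show ?case .
qed

lemma exp_vd:
  "((\<lambda>x. exp (\<i> * complex_of_real (l * x))) has_vector_derivative
     (\<i> * complex_of_real l) * exp (\<i> * complex_of_real (l * x))) (at x)"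
proof -
  have "((\<lambda>z. exp (\<i> * complex_of_real l * z)) has_field_derivative
     exp (\<i> * complex_of_real l * complex_of_real x) * (\<i> * complex_of_real l)) (at (complex_of_real x))"
    by (auto intro!: derivative_eq_intros)
  from has_vector_derivative_real_field[OF this, of UNIV]
  show ?thesis by (simp add: mult_ac)
qed



fun coef :: "nat \<Rightarrow> (nat \<Rightarrow> complex) \<times> (nat \<Rightarrow> complex)" where
  "coef 0 = ((\<lambda>n. if n = 0 then 1 else 0), (\<lambda>n. if n = 0 then 1 else 0))"
| "coef (Suc s) = ((\<lambda>n. if n < 2^s then fst (coef s) n else snd (coef s) (n - 2^s)),
                   (\<lambda>n. if n < 2^s then fst (coef s) n else - snd (coef s) (n - 2^s)))"

definition cP where "cP s = fst (coef s)"
definition cQ where "cQ s = snd (coef s)"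

lemma cP_Suc: "cP (Suc s) n = (if n < 2^s then cP s n else cQ s (n - 2^s))"
  by (simp add: cP_def cQ_def)
lemma cQ_Suc: "cQ (Suc s) n = (if n < 2^s then cP s n else - cQ s (n - 2^s))"
  by (simp add: cP_def cQ_def)

lemma split_sum: "(\<Sum>n<2^Suc s. f n) = (\<Sum>n<2^s. f n) + (\<Sum>n<(2::nat)^s. f (n + 2^s))"
proof -
  have "(\<Sum>n<2^Suc s. f n) = (\<Sum>n<2^s + 2^s. f n)" by (simp add: mult_2)
  also have "\<dots> = (\<Sum>n<2^s. f n) + (\<Sum>n<(2::nat)^s. f (n + 2^s))"
  proof -
    have "(\<Sum>n<2^s + 2^s. f n) = sum f {0..<2^s + 2^s}" by (simp add: atLeast0LessThan)
    also have "\<dots> = sum f {0..<2^s} + sum f {2^s..<2^s + 2^s}"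
      by (simp add: sum.atLeastLessThan_concat)
    also have "sum f {2^s..<2^s + 2^s} = (\<Sum>n\<in>{0..<(2::nat)^s}. f (n + 2^s))"
      by (metis add_0 sum.shift_bounds_nat_ivl)
    finally show ?thesis by (simp add: atLeast0LessThan)
  qed
  finally show ?thesis .
qed

lemma rep: "RS_P s z = (\<Sum>n<2^s. cP s n * z^n) \<and> RS_Q s z = (\<Sum>n<2^s. cQ s n * z^n)"
proof (induction s arbitrary: z)
  case 0
  then show ?case by (simp add: RS_P_def RS_Q_def cP_def cQ_def)
next
  case (Suc s)
  have P: "RS_P (Suc s) z = RS_P s z + z^2^s * RS_Q s z"
    by (simp add: RS_P_def RS_Q_def)
  have Q: "RS_Q (Suc s) z = RS_P s z - z^2^s * RS_Q s z"
    by (simp add: RS_P_def RS_Q_def)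
  have e: "z^2^s * (\<Sum>n<2^s. cQ s n * z^n) = (\<Sum>n<2^s. cQ s n * z^(n + 2^s))"
    by (simp add: sum_distrib_left power_add mult_ac)
  show ?case
    unfolding P Q split_sum[of "\<lambda>n. cP (Suc s) n * z^n"] split_sum[of "\<lambda>n. cQ (Suc s) n * z^n"]
    using Suc[of z] e by (simp add: cP_Suc cQ_Suc sum_negf)
qed


definition ES :: "(nat \<Rightarrow> complex) \<Rightarrow> nat \<Rightarrow> nat \<Rightarrow> real \<Rightarrow> complex" where
  "ES a s j \<theta> = (\<Sum>n<2^s. a n * (\<i> * of_nat n)^j * exp (\<i> * complex_of_real (real n * \<theta>)))"

lemma shifted_term:
  "(\<i> * of_nat (n + N))^j * exp (\<i> * complex_of_real (real (n + N) * \<theta>)) =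
   exp (\<i> * complex_of_real (real N * \<theta>)) *
   (\<Sum>m\<le>j. of_nat (j choose m) * (\<i> * of_nat N)^(j-m) * ((\<i> * of_nat n)^m * exp (\<i> * complex_of_real (real n * \<theta>))))"
proof -
  have "(\<i> * of_nat (n + N))^j = (\<i> * of_nat n + \<i> * of_nat N)^j" by (simp add: algebra_simps)
  also have "\<dots> = (\<Sum>m\<le>j. of_nat (j choose m) * (\<i> * of_nat n)^m * (\<i> * of_nat N)^(j-m))"
    by (rule binomial_ring)
  finally have 1: "(\<i> * of_nat (n + N))^j = \<dots>" .
  have 2: "exp (\<i> * complex_of_real (real (n + N) * \<theta>)) =
     exp (\<i> * complex_of_real (real N * \<theta>)) * exp (\<i> * complex_of_real (real n * \<theta>))"
    by (simp add: exp_add[symmetric] algebra_simps)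
  show ?thesis unfolding 1 2 by (simp add: sum_distrib_left sum_distrib_right mult_ac)
qed


lemma ES_rec:
  "ES (cP (Suc s)) (Suc s) j \<theta> = ES (cP s) s j \<theta> + exp (\<i> * complex_of_real (2^s * \<theta>)) *
      (\<Sum>m\<le>j. of_nat (j choose m) * (\<i> * 2^s)^(j-m) * ES (cQ s) s m \<theta>)"
  "ES (cQ (Suc s)) (Suc s) j \<theta> = ES (cP s) s j \<theta> - exp (\<i> * complex_of_real (2^s * \<theta>)) *
      (\<Sum>m\<le>j. of_nat (j choose m) * (\<i> * 2^s)^(j-m) * ES (cQ s) s m \<theta>)"
proof -
  define E where "E = exp (\<i> * complex_of_real (2^s * \<theta>))"
  define F where "F n = (\<i> * of_nat n)^j * exp (\<i> * complex_of_real (real n * \<theta>))" for n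
  have key: "(\<Sum>n<2^s. cQ s n * F (n + 2^s))
     = E * (\<Sum>m\<le>j. of_nat (j choose m) * (\<i> * 2^s)^(j-m) * ES (cQ s) s m \<theta>)"
  proof -
    have "E * (\<Sum>m\<le>j. of_nat (j choose m) * (\<i> * 2^s)^(j-m) * ES (cQ s) s m \<theta>) =
      (\<Sum>m\<le>j. \<Sum>n<2^s. E * (of_nat (j choose m) * (\<i> * 2^s)^(j-m) * (cQ s n * (\<i> * of_nat n)^m * exp (\<i> * complex_of_real (real n * \<theta>)))))"
      unfolding ES_def by (simp add: sum_distrib_left)
    also have "\<dots> = (\<Sum>n<2^s. \<Sum>m\<le>j. E * (of_nat (j choose m) * (\<i> * 2^s)^(j-m) * (cQ s n * (\<i> * of_nat n)^m * exp (\<i> * complex_of_real (real n * \<theta>)))))"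
      by (rule sum.swap)
    also have "\<dots> = (\<Sum>n<2^s. cQ s n * F (n + 2^s))"
    proof (rule sum.cong[OF refl])
      fix n
      show "(\<Sum>m\<le>j. E * (of_nat (j choose m) * (\<i> * 2^s)^(j-m) * (cQ s n * (\<i> * of_nat n)^m * exp (\<i> * complex_of_real (real n * \<theta>))))) = cQ s n * F (n + 2^s)"
        unfolding F_def shifted_term[of n "2^s"] E_def sum_distrib_left
        by (rule sum.cong[OF refl]) (simp add: mult_ac)
    qed
    finally show ?thesis by simp
  qed
  have S: "ES a (Suc s) j \<theta> = (\<Sum>n<2^s. a n * F n) + (\<Sum>n<2^s. a (n + 2^s) * F (n + 2^s))" for a
    unfolding ES_def F_def split_sum by (simp add: mult.assoc)
  have S0: "ES a s j \<theta> = (\<Sum>n<2^s. a n * F n)" for a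
    unfolding ES_def F_def by (simp add: mult.assoc)
  have p1: "(\<Sum>n<2^s. cP (Suc s) n * F n) = ES (cP s) s j \<theta>"
    unfolding S0 by (rule sum.cong) (auto simp: cP_Suc)
  have p2: "(\<Sum>n<2^s. cQ (Suc s) n * F n) = ES (cP s) s j \<theta>"
    unfolding S0 by (rule sum.cong) (auto simp: cQ_Suc)
  have q1: "(\<Sum>n<2^s. cP (Suc s) (n + 2^s) * F (n + 2^s)) = (\<Sum>n<2^s. cQ s n * F (n + 2^s))"
    by (rule sum.cong) (auto simp: cP_Suc)
  have q2: "(\<Sum>n<2^s. cQ (Suc s) (n + 2^s) * F (n + 2^s)) = - (\<Sum>n<2^s. cQ s n * F (n + 2^s))"
    by (simp add: cQ_Suc sum_negf)
  show "ES (cP (Suc s)) (Suc s) j \<theta> = ES (cP s) s j \<theta> + exp (\<i> * complex_of_real (2^s * \<theta>)) *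
      (\<Sum>m\<le>j. of_nat (j choose m) * (\<i> * 2^s)^(j-m) * ES (cQ s) s m \<theta>)"
    unfolding S p1 q1 key E_def ..
  show "ES (cQ (Suc s)) (Suc s) j \<theta> = ES (cP s) s j \<theta> - exp (\<i> * complex_of_real (2^s * \<theta>)) *
      (\<Sum>m\<le>j. of_nat (j choose m) * (\<i> * 2^s)^(j-m) * ES (cQ s) s m \<theta>)"
    unfolding S p2 q2 key E_def by simp
qed


lemma alg:
  fixes a b R Y K :: real
  assumes "a \<ge> 0" "b \<ge> 0" "R \<ge> 0" "Y \<ge> 0" "a^2 + b^2 \<le> Y^2" "R \<le> (K - 1) * Y" "K \<ge> 1"
  shows "a^2 + (b + R)^2 \<le> (K * Y)^2"
proof -
  have "b^2 \<le> Y^2" using assms(5) assms(1) by (smt (verit) zero_le_power2)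
  hence "b \<le> Y" using assms by (meson power2_le_imp_le)
  hence "a^2 + (b + R)^2 \<le> (Y + R)^2" using assms
  proof -
    have "R * b \<le> R * Y" using \<open>b \<le> Y\<close> assms(3) by (rule mult_left_mono)
    thus ?thesis using assms(5) by (simp add: power2_eq_square algebra_simps)
  qed
  also have "\<dots> \<le> (K * Y)^2" using assms by (intro power_mono) (auto simp: algebra_simps)
  finally show ?thesis .
qed

lemma parallelo: "cmod (a + b)^2 + cmod (a - b)^2 = 2 * (cmod a^2 + cmod b^2)"
  unfolding cmod_power2 by (simp add: power2_eq_square algebra_simps)

lemma ES0: "ES a 0 j \<theta> = a 0 * (if j = 0 then 1 else 0)"
  by (simp add: ES_def)

lemma ES_bound:
  "cmod (ES (cP s) s j \<theta>)^2 + cmod (ES (cQ s) s j \<theta>)^2 \<le> ((2::real)^(s*j))^2 * 2^(s+1)"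
proof (induction s arbitrary: j)
  case 0
  then show ?case by (simp add: ES0 cP_def cQ_def)
next
  case (Suc s)
  define N :: real where "N = 2^s"
  define Y where "Y = N^j * sqrt (2*N)"
  have Npos: "N > 0" by (simp add: N_def)
  have Ypos: "Y \<ge> 0" using Npos by (simp add: Y_def)
  have Zb: "cmod (ES (cQ s) s m \<theta>) \<le> N^m * sqrt (2*N)" for m
  proof -
    have "cmod (ES (cQ s) s m \<theta>)^2 \<le> (N^m * sqrt (2*N))^2"
      using Suc.IH[of m] Npos
      by (simp add: N_def power_mult_distrib power_mult[symmetric] mult_ac)
         (smt (verit) zero_le_power2 power_mult)
    thus ?thesis by (rule power2_le_imp_le) (use Npos in auto)
  qed
  define A where "A = ES (cP s) s j \<theta>"
  define B where "B = (\<Sum>m\<le>j. of_nat (j choose m) * (\<i> * 2^s)^(j-m) * ES (cQ s) s m \<theta>)"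
  define e where "e = exp (\<i> * complex_of_real (2^s * \<theta>))"
  have e1: "cmod e = 1" by (simp add: e_def)
  define R where "R = (\<Sum>m<j. real (j choose m) * N^(j-m) * cmod (ES (cQ s) s m \<theta>))"
  have Rnn: "R \<ge> 0" unfolding R_def using Npos by (intro sum_nonneg) auto
  have "cmod B \<le> (\<Sum>m\<le>j. cmod (of_nat (j choose m) * (\<i> * 2^s)^(j-m) * ES (cQ s) s m \<theta>))"
    unfolding B_def by (rule norm_sum)
  also have "\<dots> = (\<Sum>m\<le>j. real (j choose m) * N^(j-m) * cmod (ES (cQ s) s m \<theta>))"
    by (simp add: norm_mult norm_power N_def)
  also have "\<dots> = cmod (ES (cQ s) s j \<theta>) + R"
    unfolding R_def by (simp add: lessThan_Suc_atMost[symmetric])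
  finally have Bb: "cmod B \<le> cmod (ES (cQ s) s j \<theta>) + R" .
  have "R \<le> (\<Sum>m<j. real (j choose m) * N^(j-m) * (N^m * sqrt (2*N)))"
    unfolding R_def using Npos Zb by (intro sum_mono mult_left_mono) auto
  also have "\<dots> = (\<Sum>m<j. real (j choose m)) * Y"
    unfolding Y_def sum_distrib_right
  proof (rule sum.cong[OF refl])
    fix m assume "m \<in> {..<j}"
    hence "N^(j-m) * N^m = N^j" by (simp add: power_add[symmetric])
    thus "real (j choose m) * N^(j-m) * (N^m * sqrt (2*N)) = real (j choose m) * (N^j * sqrt (2*N))"
      by (metis mult.assoc)
  qed
  also have "(\<Sum>m<j. real (j choose m)) = 2^j - 1"
  proof -
    have "(\<Sum>m\<le>j. real (j choose m)) = 2^j"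
      using choose_row_sum[of j] by (metis of_nat_numeral of_nat_power of_nat_sum)
    thus ?thesis by (simp add: lessThan_Suc_atMost[symmetric])
  qed
  finally have Rb: "R \<le> (2^j - 1) * Y" .
  have IHj: "cmod A ^2 + cmod (ES (cQ s) s j \<theta>)^2 \<le> Y^2"
    using Suc.IH[of j] Npos unfolding A_def Y_def
    by (simp add: N_def power_mult_distrib power_mult[symmetric] mult_ac)
  have "cmod A ^2 + cmod B ^2 \<le> cmod A ^2 + (cmod (ES (cQ s) s j \<theta>) + R)^2"
    using Bb by (simp add: power_mono)
  also have "\<dots> \<le> (2^j * Y)^2"
    by (rule alg) (use IHj Rb Rnn Ypos in auto)
  finally have AB: "cmod A ^2 + cmod B ^2 \<le> (2^j * Y)^2" .
  have "cmod (ES (cP (Suc s)) (Suc s) j \<theta>)^2 + cmod (ES (cQ (Suc s)) (Suc s) j \<theta>)^2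
      = 2 * (cmod A ^2 + cmod (e * B)^2)"
    unfolding ES_rec A_def[symmetric] B_def[symmetric] e_def[symmetric] by (rule parallelo)
  also have "\<dots> = 2 * (cmod A ^2 + cmod B ^2)" by (simp add: norm_mult e1)
  also have "\<dots> \<le> 2 * (2^j * Y)^2" using AB by simp
  also have "\<dots> = ((2::real)^(Suc s*j))^2 * 2^(Suc s+1)"
    using Npos by (simp add: Y_def N_def power_mult_distrib power_add power_mult[symmetric] mult_ac)
  finally show ?case .
qed



lemma expand:
  assumes "T \<noteq> 0"
  shows "(\<Sum>n<2^s. d * a n * ((\<i> * complex_of_real (w + real n / T))^k * exp (\<i> * complex_of_real ((w + real n / T) * x))))
   = (\<Sum>j\<le>k. of_nat (k choose j) * ((\<i> * complex_of_real w)^(k-j) * exp (\<i> * complex_of_real (w * x)) * (d / complex_of_real T ^ j * ES a s j (x / T))))"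
proof -
  define E where "E = exp (\<i> * complex_of_real (w * x))"
  have "(\<Sum>j\<le>k. of_nat (k choose j) * ((\<i> * complex_of_real w)^(k-j) * E * (d / complex_of_real T ^ j * ES a s j (x / T))))
     = (\<Sum>j\<le>k. \<Sum>n<2^s. of_nat (k choose j) * ((\<i> * complex_of_real w)^(k-j) * E * (d / complex_of_real T ^ j * (a n * (\<i> * of_nat n)^j * exp (\<i> * complex_of_real (real n * (x / T)))))))"
    unfolding ES_def by (simp add: sum_distrib_left)
  also have "\<dots> = (\<Sum>n<2^s. \<Sum>j\<le>k. of_nat (k choose j) * ((\<i> * complex_of_real w)^(k-j) * E * (d / complex_of_real T ^ j * (a n * (\<i> * of_nat n)^j * exp (\<i> * complex_of_real (real n * (x / T)))))))"
    by (rule sum.swap)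
  also have "\<dots> = (\<Sum>n<2^s. d * a n * ((\<i> * complex_of_real (w + real n / T))^k * exp (\<i> * complex_of_real ((w + real n / T) * x))))"
  proof (rule sum.cong[OF refl])
    fix n
    have "(\<i> * complex_of_real (w + real n / T))^k = (\<i> * of_nat n / complex_of_real T + \<i> * complex_of_real w)^k"
      by (simp add: algebra_simps)
    also have "\<dots> = (\<Sum>j\<le>k. of_nat (k choose j) * (\<i> * of_nat n / complex_of_real T)^j * (\<i> * complex_of_real w)^(k-j))"
      by (rule binomial_ring)
    finally have b: "(\<i> * complex_of_real (w + real n / T))^k = \<dots>" .
    have ex: "exp (\<i> * complex_of_real ((w + real n / T) * x)) = E * exp (\<i> * complex_of_real (real n * (x / T)))"
      unfolding E_def by (simp add: exp_add[symmetric] algebra_simps)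
    show "(\<Sum>j\<le>k. of_nat (k choose j) * ((\<i> * complex_of_real w)^(k-j) * E * (d / complex_of_real T ^ j * (a n * (\<i> * of_nat n)^j * exp (\<i> * complex_of_real (real n * (x / T))))))) =
       d * a n * ((\<i> * complex_of_real (w + real n / T))^k * exp (\<i> * complex_of_real ((w + real n / T) * x)))"
      unfolding b ex sum_distrib_left sum_distrib_right
      by (rule sum.cong[OF refl]) (simp add: power_divide mult_ac)
  qed
  finally show ?thesis unfolding E_def by simp
qed

lemma alpha_rep: "RS_alpha t x = complex_of_real (2 powr (- (real t + 1) / 2)) * ES (cP t) t 0 (x / RS_T t)"
  "RS_beta t x = complex_of_real (2 powr (- (real t + 1) / 2)) * ES (cQ t) t 0 (x / RS_T t)"
proof -
  have e: "exp (\<i> * complex_of_real y) ^ n = exp (\<i> * complex_of_real (real n * y))" for y n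
    by (simp add: exp_of_nat_mult[symmetric] mult_ac)
  show "RS_alpha t x = complex_of_real (2 powr (- (real t + 1) / 2)) * ES (cP t) t 0 (x / RS_T t)"
    unfolding RS_alpha_def ES_def rep[THEN conjunct1] e by simp
  show "RS_beta t x = complex_of_real (2 powr (- (real t + 1) / 2)) * ES (cQ t) t 0 (x / RS_T t)"
    unfolding RS_beta_def ES_def rep[THEN conjunct2] e by simp
qed



lemma ES_norm:
  "cmod (ES (cP s) s j \<theta>) \<le> 2^(s*j) * sqrt (2^(s+1))"
  "cmod (ES (cQ s) s j \<theta>) \<le> 2^(s*j) * sqrt (2^(s+1))"
proof -
  have r: "((2::real)^(s*j))^2 * 2^(s+1) = (2^(s*j) * sqrt (2^(s+1)))^2"
    by (simp add: power_mult_distrib)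
  have "cmod (ES (cP s) s j \<theta>)^2 \<le> (2^(s*j) * sqrt (2^(s+1)))^2"
    using ES_bound[of s j \<theta>] r by (smt (verit) zero_le_power2)
  thus "cmod (ES (cP s) s j \<theta>) \<le> 2^(s*j) * sqrt (2^(s+1))"
    by (rule power2_le_imp_le) auto
  have "cmod (ES (cQ s) s j \<theta>)^2 \<le> (2^(s*j) * sqrt (2^(s+1)))^2"
    using ES_bound[of s j \<theta>] r by (smt (verit) zero_le_power2)
  thus "cmod (ES (cQ s) s j \<theta>) \<le> 2^(s*j) * sqrt (2^(s+1))"
    by (rule power2_le_imp_le) auto
qed

lemma c_sqrt: "2 powr (- (real t + 1) / 2) * sqrt (2^(t+1)) = 1"
proof -
  have "sqrt ((2::real)^(t+1)) = 2 powr ((real t + 1) / 2)"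
    by (simp add: powr_half_sqrt_powr powr_realpow[symmetric] add.commute powr_add)
  thus ?thesis by (simp add: powr_add[symmetric] field_simps)
qed

lemma term_bound:
  assumes "a = cP t \<or> a = cQ t"
  shows "cmod (complex_of_real (2 powr (- (real t + 1) / 2)) / complex_of_real (RS_T t) ^ j * ES a t j \<theta>) \<le> (1/1024)^j"
proof -
  define c where "c = 2 powr (- (real t + 1) / 2)"
  have cpos: "c > 0" by (simp add: c_def)
  have T: "RS_T t = 2^t * 1024" by (simp add: RS_T_def power_add)
  have "cmod (ES a t j \<theta>) \<le> 2^(t*j) * sqrt (2^(t+1))" using assms ES_norm by auto
  hence "cmod (complex_of_real c / complex_of_real (RS_T t) ^ j * ES a t j \<theta>) \<le> c / RS_T t ^ j * (2^(t*j) * sqrt (2^(t+1)))"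
    using cpos by (simp add: norm_mult norm_divide norm_power RS_T_def divide_right_mono mult_left_mono)
  also have "\<dots> = (c * sqrt (2^(t+1))) * (2^(t*j) / RS_T t ^ j)" by simp
  also have "\<dots> = (1/1024)^j" unfolding c_def c_sqrt T
    by (simp add: power_mult power_mult_distrib power_divide)
  finally show ?thesis unfolding c_def .
qed



theorem lemma3p7:
  fixes t k :: nat and x :: real
  assumes "odd t" and "t > 0" and "k \<le> 4"
  shows "cmod (higher_vderiv k (RS_H t) x
            - (\<i> ^ k * exp (\<i> * complex_of_real x) * RS_alpha t x
               + (2 * \<i>) ^ k * exp (2 * \<i> * complex_of_real x) * RS_beta t x)) \<le> 1 / 8
         \<and> cmod (higher_vderiv k (RS_H t) x) \<le> 2 ^ k + 2"
proof -
  define T where "T = RS_T t"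
  have Tnz: "T \<noteq> 0" by (simp add: T_def RS_T_def)
  define c where "c = complex_of_real (2 powr (- (real t + 1) / 2))"
  define g where "g k x = (\<Sum>n<2^t. c * cP t n * ((\<i> * complex_of_real (1 + real n / T))^k * exp (\<i> * complex_of_real ((1 + real n / T) * x))))
     + (\<Sum>n<2^t. c * cQ t n * ((\<i> * complex_of_real (2 + real n / T))^k * exp (\<i> * complex_of_real ((2 + real n / T) * x))))" for k x
  define al where "al j = c / complex_of_real T ^ j * ES (cP t) t j (x / T)" for j
  define be where "be j = c / complex_of_real T ^ j * ES (cQ t) t j (x / T)" for j
  define U where "U k j = (\<i> * complex_of_real 1)^(k-j) * exp (\<i> * complex_of_real (1 * x)) * al j
      + (\<i> * complex_of_real 2)^(k-j) * exp (\<i> * complex_of_real (2 * x)) * be j" for k j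
  have G: "g k x = (\<Sum>j\<le>k. of_nat (k choose j) * U k j)" for k
    unfolding g_def expand[OF Tnz] U_def al_def be_def
    by (simp add: sum.distrib distrib_left)
  have deriv: "(g k has_vector_derivative g (Suc k) y) (at y)" for k y
    unfolding g_def
    apply (rule has_vector_derivative_eq_rhs)
     apply (rule has_vector_derivative_add; rule has_vector_derivative_sum;
            rule has_vector_derivative_mult_right; rule has_vector_derivative_mult_right; rule exp_vd)
    apply (simp add: mult_ac)
    done
  have H0: "RS_H t = g 0"
  proof
    fix y
    have e: "exp (\<i> * complex_of_real ((w + real n / T) * y)) = exp (\<i> * complex_of_real (w * y)) * exp (\<i> * complex_of_real (real n * (y / T)))" for w n
      by (simp add: exp_add[symmetric] algebra_simps)
    show "RS_H t y = g 0 y"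
      unfolding RS_H_def alpha_rep g_def e ES_def T_def[symmetric] c_def[symmetric]
      by (simp add: sum_distrib_left mult_ac)
  qed
  have HV: "higher_vderiv k (RS_H t) = g k"
    by (rule hv_eq[OF H0 deriv])
  have main: "\<i> ^ k * exp (\<i> * complex_of_real x) * RS_alpha t x
               + (2 * \<i>) ^ k * exp (2 * \<i> * complex_of_real x) * RS_beta t x = U k 0"
    unfolding U_def al_def be_def alpha_rep T_def c_def by (simp add: mult_ac)
  have ab: "cmod (al j) \<le> (1/1024)^j" "cmod (be j) \<le> (1/1024)^j" for j
    unfolding al_def be_def c_def T_def using term_bound by auto
  have Ub: "cmod (U k j) \<le> (1/1024)^j * (1 + 2^(k-j))" for j
  proof -
    have "cmod (U k j) \<le> cmod (al j) + 2^(k-j) * cmod (be j)"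
      unfolding U_def
      by (rule order_trans[OF norm_triangle_ineq]) (simp add: norm_mult norm_power)
    also have "\<dots> \<le> (1/1024)^j + 2^(k-j) * (1/1024)^j"
      using ab[of j] by (intro add_mono mult_left_mono) auto
    finally show ?thesis by (simp add: algebra_simps)
  qed
  have split: "{..k} = insert 0 {1..k}" by auto
  have Gs: "g k x = U k 0 + (\<Sum>j\<in>{1..k}. of_nat (k choose j) * U k j)"
    unfolding G split by (simp add: sum.insert)
  have "cmod (\<Sum>j\<in>{1..k}. of_nat (k choose j) * U k j) \<le> (\<Sum>j\<in>{1..k}. real (k choose j) * ((1/1024)^j * (1 + 2^(k-j))))"
    by (rule order_trans[OF norm_sum], rule sum_mono) (simp add: norm_mult Ub mult_left_mono)
  also have "\<dots> \<le> (\<Sum>j\<in>{1..k}. real (k choose j) * ((1/1024) * (1 + 2^(k-j))))"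
  proof (rule sum_mono)
    fix j assume "j \<in> {1..k}"
    hence "(1/1024::real)^j \<le> (1/1024)^1" by (intro power_decreasing) auto
    thus "real (k choose j) * ((1/1024)^j * (1 + 2^(k-j))) \<le> real (k choose j) * ((1/1024) * (1 + 2^(k-j)))"
      by (intro mult_left_mono mult_right_mono) auto
  qed
  also have "\<dots> \<le> (\<Sum>j\<le>k. real (k choose j) * ((1/1024) * (1 + 2^(k-j))))"
    unfolding split by (simp add: sum.insert)
  also have "\<dots> = (1/1024) * ((\<Sum>j\<le>k. real (k choose j)) + (\<Sum>j\<le>k. real (k choose j) * 2^(k-j)))"
    unfolding distrib_left sum_distrib_left sum.distrib[symmetric] by (rule sum.cong) (simp_all add: algebra_simps)
  also have "(\<Sum>j\<le>k. real (k choose j)) = 2^k"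
    using choose_row_sum[of k] by (metis of_nat_numeral of_nat_power of_nat_sum)
  also have "(\<Sum>j\<le>k. real (k choose j) * 2^(k-j)) = 3^k"
    using binomial_ring[of "1::real" 2 k] by simp
  also have "(1/1024) * (2^k + 3^k) \<le> (1/1024) * ((2::real)^4 + 3^4)"
    using assms(3) by (intro mult_left_mono add_mono power_increasing) auto
  finally have err: "cmod (g k x - U k 0) \<le> 1/8" unfolding Gs by simp
  have "cmod (U k 0) \<le> 1 + 2^k" using Ub[of 0] by simp
  hence "cmod (g k x) \<le> 2^k + 2" using err norm_triangle_sub[of "g k x" "U k 0"] by simp
  with err show ?thesis unfolding HV main by simp
qed

end
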